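(* For all $i,n\ge1$, $b_i(\mathcal{A}_n)<\frac{2^{in}}{i!}$. Consequently, for all $n>1$, the number $R_n$ of chambers of $\mathcal{A}_n$ satisfies $\log_2(R_n)<n^2-n+1$.
   Context: For $n\ge1$, the resonance arrangement $\mathcal{A}_n$ is the arrangement in $\mathbb{R}^n$ of the hyperplanes $H_I=\{x:\sum_{i\in I}x_i=0\}$ for all nonempty $I\subseteq[n]$. For an arrangement $\mathcal{A}$ in $\mathbb{R}^n$, its characteristic polynomial is $\chi(\mathcal{A};t)=\sum_{S\subseteq\mathcal{A}}(-1)^{|S|}t^{r(\mathcal{A})-r(S)}$ where $r(S)=\operatorname{codim}\bigcap_{H\in S}H$, and the $i$-th Betti number $b_i(\mathcal{A})$ is the absolute value of the coefficient of $t^{n-i}$ in $\chi(\mathcal{A};t)$. $R_n$ is the number of chambers (connected components of $\mathbb{R}^n\setminus\bigcup_{H\in\mathcal{A}_n}H$) of $\mathcal{A}_n$. *)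

theory Defs
  imports "HOL-Analysis.Analysis" "HOL-Computational_Algebra.Polynomial"
begin

text \<open>Ambient space R^n is modelled as real^'n with n = CARD('n).
  A hyperplane arrangement is a (finite) set of hyperplanes, i.e. of subsets of real^'n.\<close>

definition res_hyperplane :: "'n::finite set \<Rightarrow> (real^'n) set" where
  "res_hyperplane I = {x. (\<Sum>i\<in>I. x $ i) = 0}"

definition resonance_arrangement :: "(real^'n::finite) set set" where
  "resonance_arrangement = {res_hyperplane I | I. I \<noteq> {}}"

text \<open>r(S) = codimension of the intersection of the hyperplanes in S (empty intersection = whole space).\<close>
definition arr_rank :: "(real^'n::finite) set set \<Rightarrow> nat" where
  "arr_rank S = CARD('n) - dim (\<Inter> S)"

definition char_poly :: "(real^'n::finite) set set \<Rightarrow> int poly" where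
  "char_poly A = (\<Sum>S\<in>Pow A. monom ((-1) ^ card S) (arr_rank A - arr_rank S))"

definition betti :: "(real^'n::finite) set set \<Rightarrow> nat \<Rightarrow> int" where
  "betti A i = (if i \<le> CARD('n) then \<bar>coeff (char_poly A) (CARD('n) - i)\<bar> else 0)"

definition num_chambers :: "(real^'n::finite) set set \<Rightarrow> nat" where
  "num_chambers A = card (components (UNIV - \<Union> A))"

end

theory Submission imports Defs begin

definition hp :: "real^'n::finite \<Rightarrow> (real^'n) set" where "hp a = {x. a \<bullet> x = 0}"

definition cc :: "(real^'n::finite) set \<Rightarrow> (real^'n) set set \<Rightarrow> nat \<Rightarrow> int" where
 "cc V F i = (\<Sum>S\<in>Pow F. if dim V - dim (V \<inter> \<Inter>S) = i then (-1)^card S else 0)"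

lemma dim_cut:
  fixes V :: "(real^'n::finite) set"
  assumes "subspace V" "v \<in> V" "a \<bullet> v \<noteq> 0"
  shows "dim V = dim (V \<inter> hp a) + 1"
proof -
  let ?W = "V \<inter> hp a"
  have sw: "subspace ?W" using assms(1) unfolding hp_def
    by (simp add: subspace_inter subspace_hyperplane)
  have spW: "span ?W = ?W" using sw by (simp add: span_eq_iff)
  have "v \<notin> span ?W" by (simp only: spW) (simp add: hp_def assms)
  hence d1: "dim (insert v ?W) = dim ?W + 1" by (simp add: dim_insert)
  have "V \<subseteq> span (insert v ?W)"
  proof
    fix x assume x: "x \<in> V"
    let ?y = "x - ((a \<bullet> x) / (a \<bullet> v)) *\<^sub>R v"
    have "?y \<in> ?W" using x assms unfolding hp_def
      by (auto simp: inner_diff_right subspace_diff subspace_scale)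
    hence "?y \<in> span (insert v ?W)" by (simp add: span_base)
    moreover have "((a \<bullet> x) / (a \<bullet> v)) *\<^sub>R v \<in> span (insert v ?W)"
      by (simp add: span_base span_scale)
    ultimately have "?y + ((a \<bullet> x) / (a \<bullet> v)) *\<^sub>R v \<in> span (insert v ?W)"
      by (rule span_add)
    thus "x \<in> span (insert v ?W)" by simp
  qed
  hence "dim V \<le> dim ?W + 1" using d1
    by (metis dim_span dim_subset)
  moreover have "dim ?W < dim V"
  proof -
    have "span ?W \<subset> span V"
      using assms sw \<open>v \<notin> span ?W\<close> by (metis Int_lower1 span_eq_iff span_mono psubsetI span_base)
    thus ?thesis by (rule dim_psubset)
  qed
  ultimately show ?thesis by linarith
qed

lemma cc_insert:
  fixes V :: "(real^'n::finite) set"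
  assumes "finite F" "K \<notin> F"
  shows "cc V (insert K F) i = cc V F i
     - (\<Sum>S\<in>Pow F. if dim V - dim ((V \<inter> K) \<inter> \<Inter>S) = i then (-1)^card S else 0)"
proof -
  have inj: "inj_on (insert K) (Pow F)" using assms(2) by (auto simp: inj_on_def)
  have dis: "Pow F \<inter> insert K ` Pow F = {}" using assms(2) by auto
  have "cc V (insert K F) i = cc V F i +
     (\<Sum>S\<in>insert K ` Pow F. if dim V - dim (V \<inter> \<Inter>S) = i then (-1)^card S else 0)"
    unfolding cc_def Pow_insert using assms(1) dis by (simp add: sum.union_disjoint)
  also have "(\<Sum>S\<in>insert K ` Pow F. if dim V - dim (V \<inter> \<Inter>S) = i then (-1)^card S else 0)
     = (\<Sum>S\<in>Pow F. if dim V - dim (V \<inter> \<Inter>(insert K S)) = i then (-1)^card (insert K S) else (0::int))"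
    by (subst sum.reindex[OF inj]) simp
  also have "\<dots> = - (\<Sum>S\<in>Pow F. if dim V - dim ((V \<inter> K) \<inter> \<Inter>S) = i then (-1)^card S else 0)"
    unfolding sum_negf[symmetric]
  proof (rule sum.cong[OF refl])
    fix S assume "S \<in> Pow F"
    hence "finite S" "K \<notin> S" using assms by (auto intro: finite_subset)
    hence "card (insert K S) = Suc (card S)" by simp
    moreover have "V \<inter> \<Inter>(insert K S) = (V \<inter> K) \<inter> \<Inter>S" by auto
    ultimately show "(if dim V - dim (V \<inter> \<Inter>(insert K S)) = i then (-1)^card (insert K S) else (0::int))
      = - (if dim V - dim ((V \<inter> K) \<inter> \<Inter>S) = i then (-1)^card S else 0)" by simp
  qed
  finally show ?thesis by simp
qed

lemma cc_bound:
  fixes F :: "(real^'n::finite) set set"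
  assumes "finite F" "\<forall>K\<in>F. \<exists>a. K = hp a"
  shows "subspace V \<Longrightarrow> 0 \<le> (-1)^i * cc V F i \<and> (-1)^i * cc V F i \<le> int (card F choose i)"
  using assms
proof (induction F arbitrary: V i rule: finite_induct)
  case empty
  show ?case by (cases i) (auto simp: cc_def)
next
  case (insert K F)
  obtain a where a: "K = hp a" using insert.prems by auto
  have IH: "\<And>W j. subspace W \<Longrightarrow> 0 \<le> (-1)^j * cc W F j \<and> (-1)^j * cc W F j \<le> int (card F choose j)"
    using insert by auto
  show ?case
  proof (cases "V \<subseteq> K")
    case True
    hence "V \<inter> K = V" by auto
    hence "cc V (insert K F) i = 0" using cc_insert[OF insert.hyps(1,2), of V i] by (simp add: cc_def)
    thus ?thesis by simp
  next
    case False
    then obtain v where v: "v \<in> V" "a \<bullet> v \<noteq> 0" using a by (auto simp: hp_def)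
    let ?W = "V \<inter> K"
    have sw: "subspace ?W" using insert.prems(1) a by (simp add: subspace_inter subspace_hyperplane hp_def)
    have dV: "dim V = dim ?W + 1" using dim_cut[OF insert.prems(1) v] a by simp
    have le: "\<And>S. dim (?W \<inter> \<Inter>S) \<le> dim ?W" by (intro dim_subset) auto
    have cF: "card (insert K F) = Suc (card F)" using insert.hyps by simp
    show ?thesis
    proof (cases i)
      case 0
      have "(\<Sum>S\<in>Pow F. if dim V - dim (?W \<inter> \<Inter>S) = i then (-1)^card S else (0::int)) = 0"
        using le dV 0 by (intro sum.neutral) (auto, metis le Suc_n_not_le_n le_trans)
      hence "cc V (insert K F) i = cc V F i" using cc_insert[OF insert.hyps(1,2), of V i] by simp
      thus ?thesis using IH[OF insert.prems(1), of i] 0 by simp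
    next
      case (Suc j)
      have "(\<Sum>S\<in>Pow F. if dim V - dim (?W \<inter> \<Inter>S) = i then (-1)^card S else (0::int)) = cc ?W F j"
        unfolding cc_def using le dV Suc by (intro sum.cong refl) (auto simp: Suc_diff_le)
      hence e: "cc V (insert K F) i = cc V F i - cc ?W F j" using cc_insert[OF insert.hyps(1,2), of V i] by simp
      have "(-1)^i * cc V (insert K F) i = (-1)^i * cc V F i + (-1)^j * cc ?W F j"
      proof -
        have e': "cc V (insert K F) (Suc j) = cc V F (Suc j) - cc ?W F j" using e Suc by simp
        show ?thesis unfolding Suc e' by (simp add: algebra_simps)
      qed
      moreover have "card (insert K F) choose i = (card F choose i) + (card F choose j)"
        using cF Suc by simp
      ultimately show ?thesis using IH[OF insert.prems(1), of i] IH[OF sw, of j] by simp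
    qed
  qed
qed

lemma mix_sign:
  fixes p q t :: real
  assumes "0 \<le> t" "t \<le> 1" "p \<noteq> 0" "q \<noteq> 0" "p > 0 \<longleftrightarrow> q > 0"
  shows "(1-t)*p + t*q \<noteq> 0 \<and> ((1-t)*p + t*q > 0 \<longleftrightarrow> p > 0)"
proof (cases "p > 0")
  case True
  hence "q > 0" using assms by simp
  have "(1-t)*p \<ge> 0" "t*q \<ge> 0" using assms True \<open>q>0\<close> by simp_all
  moreover have "(1-t)*p > 0 \<or> t*q > 0" using assms True \<open>q>0\<close>
    by (cases "t = 1") simp_all
  ultimately show ?thesis using True by linarith
next
  case False
  hence "p < 0" "q < 0" using assms by auto
  have "(1-t)*p \<le> 0" "t*q \<le> 0" using assms \<open>p<0\<close> \<open>q<0\<close>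
    by (simp_all add: mult_nonneg_nonpos)
  moreover have "(1-t)*p < 0 \<or> t*q < 0" using assms \<open>p<0\<close> \<open>q<0\<close>
    by (cases "t = 1") (simp_all add: mult_pos_neg)
  ultimately show ?thesis using False by linarith
qed

definition sv :: "(real^'n::finite) set \<Rightarrow> real^'n \<Rightarrow> (real^'n) set" where
  "sv F x = {b\<in>F. b \<bullet> x > 0}"

definition RR :: "(real^'n::finite) set \<Rightarrow> (real^'n) set \<Rightarrow> (real^'n) set set" where
  "RR V F = sv F ` {x\<in>V. \<forall>b\<in>F. b \<bullet> x \<noteq> 0}"

lemma RR_sub: "RR V F \<subseteq> Pow F" by (auto simp: RR_def sv_def)

lemma pascal_sum: "(\<Sum>j\<le>d. Suc m choose j) = (\<Sum>j\<le>d. m choose j) + (\<Sum>j<d. m choose j)"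
proof (cases d)
  case 0 then show ?thesis by simp
next
  case (Suc e)
  have A: "(\<Sum>j\<le>Suc e. Suc m choose j) = 1 + (\<Sum>j\<le>e. m choose j) + (\<Sum>j\<le>e. m choose Suc j)"
    by (simp only: sum.atMost_Suc_shift) (simp add: sum.distrib)
  have B: "(\<Sum>j\<le>Suc e. m choose j) = 1 + (\<Sum>j\<le>e. m choose Suc j)"
    by (simp only: sum.atMost_Suc_shift) simp
  show ?thesis using A B Suc by (simp add: lessThan_Suc_atMost)
qed

lemma RR_bound:
  fixes F :: "(real^'n::finite) set"
  assumes "finite F"
  shows "subspace V \<Longrightarrow> dim V \<le> d \<Longrightarrow> card (RR V F) \<le> (\<Sum>j\<le>d. card F choose j)"
  using assms
proof (induction F arbitrary: V d rule: finite_induct)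
  case empty
  have "RR V {} \<subseteq> {{}}" using RR_sub[of V "{}"] by auto
  hence "card (RR V {}) \<le> card {{}::(real^'n) set}" by (intro card_mono) auto
  moreover have "(\<Sum>j\<le>d. (0::nat) choose j) = 1" by (induction d) auto
  ultimately show ?case by simp
next
  case (insert b F)
  let ?X = "{x\<in>V. \<forall>c\<in>insert b F. c \<bullet> x \<noteq> 0}"
  let ?P = "sv (insert b F) ` {x\<in>?X. b \<bullet> x > 0}"
  let ?N = "sv (insert b F) ` {x\<in>?X. b \<bullet> x < 0}"
  let ?\<rho> = "\<lambda>\<sigma>. \<sigma> - {b}"
  have svr: "?\<rho> (sv (insert b F) x) = sv F x" for x using insert.hyps(2) by (auto simp: sv_def)
  have RU: "RR V (insert b F) = ?P \<union> ?N" unfolding RR_def by (auto simp: linorder_neq_iff)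
  have fP: "finite ?P" "finite ?N" using RR_sub[of V "insert b F"] insert.hyps(1) RU
    by (auto intro: finite_subset)
  have injP: "inj_on ?\<rho> ?P"
  proof (rule inj_onI)
    fix s t assume "s \<in> ?P" "t \<in> ?P" "s - {b} = t - {b}"
    moreover have "b \<in> s" "b \<in> t" using \<open>s \<in> ?P\<close> \<open>t \<in> ?P\<close> by (auto simp: sv_def)
    ultimately show "s = t" by blast
  qed
  have injN: "inj_on ?\<rho> ?N"
  proof (rule inj_onI)
    fix s t assume "s \<in> ?N" "t \<in> ?N" "s - {b} = t - {b}"
    moreover have "b \<notin> s" "b \<notin> t" using \<open>s \<in> ?N\<close> \<open>t \<in> ?N\<close> by (auto simp: sv_def)
    ultimately show "s = t" by blast
  qed
  have sub1: "?\<rho> ` ?P \<union> ?\<rho> ` ?N \<subseteq> RR V F"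
    unfolding RR_def image_image svr by auto
  have finRR: "finite (RR W F)" for W using RR_sub[of W F] insert.hyps(1) by (auto intro: finite_subset)
  let ?W = "V \<inter> hp b"
  have sub2: "?\<rho> ` ?P \<inter> ?\<rho> ` ?N \<subseteq> RR ?W F"
  proof
    fix \<sigma> assume "\<sigma> \<in> ?\<rho> ` ?P \<inter> ?\<rho> ` ?N"
    then obtain x y where x: "x \<in> ?X" "b \<bullet> x > 0" and y: "y \<in> ?X" "b \<bullet> y < 0"
      and sx: "\<sigma> = sv F x" and sy: "\<sigma> = sv F y"
      unfolding image_image svr by blast
    define t where "t = (b \<bullet> x) / (b \<bullet> x - b \<bullet> y)"
    have t01: "0 \<le> t" "t \<le> 1" using x y by (auto simp: t_def divide_simps)
    define z where "z = (1 - t) *\<^sub>R x + t *\<^sub>R y"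
    have zc: "c \<bullet> z = (1-t) * (c \<bullet> x) + t * (c \<bullet> y)" for c
      by (simp add: z_def inner_add_right inner_scaleR_right)
    have "b \<bullet> z = 0" unfolding zc using x y by (simp add: t_def field_simps)
    moreover have "z \<in> V" using x y insert.prems(1) unfolding z_def
      by (auto intro: subspace_add subspace_scale)
    moreover have cz: "c \<bullet> z \<noteq> 0 \<and> (c \<bullet> z > 0 \<longleftrightarrow> c \<bullet> x > 0)" if "c \<in> F" for c
    proof -
      have "c \<bullet> x \<noteq> 0" "c \<bullet> y \<noteq> 0" using x y that by auto
      moreover have "c \<bullet> x > 0 \<longleftrightarrow> c \<bullet> y > 0" using sx sy that by (auto simp: sv_def set_eq_iff)
      ultimately show ?thesis unfolding zc using mix_sign[OF t01] by blast
    qed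
    moreover have "sv F z = \<sigma>" using cz sx by (auto simp: sv_def)
    ultimately show "\<sigma> \<in> RR ?W F" unfolding RR_def hp_def using cz by (auto intro!: image_eqI[of _ _ z])
  qed
  have bnd2: "card (?\<rho> ` ?P \<inter> ?\<rho> ` ?N) \<le> (\<Sum>j<d. card F choose j)"
  proof (cases "?\<rho> ` ?P \<inter> ?\<rho> ` ?N = {}")
    case True then show ?thesis by simp
  next
    case False
    then obtain x where x: "x \<in> V" "b \<bullet> x > 0" by auto
    have sw: "subspace ?W" using insert.prems(1) by (simp add: subspace_inter subspace_hyperplane hp_def)
    have "dim V = dim ?W + 1" using dim_cut[OF insert.prems(1) x(1)] x(2) by simp
    then obtain e where e: "d = Suc e" "dim ?W \<le> e" using insert.prems(2)
      by (metis Suc_eq_plus1 Suc_le_D Suc_le_mono)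
    have "card (?\<rho> ` ?P \<inter> ?\<rho> ` ?N) \<le> card (RR ?W F)" using sub2 finRR by (rule card_mono[rotated])
    also have "\<dots> \<le> (\<Sum>j\<le>e. card F choose j)" using insert.IH[OF sw e(2)] .
    finally show ?thesis using e by (simp add: lessThan_Suc_atMost)
  qed
  have "card (RR V (insert b F)) \<le> card ?P + card ?N" unfolding RU by (rule card_Un_le)
  also have "\<dots> = card (?\<rho> ` ?P) + card (?\<rho> ` ?N)" by (simp only: card_image[OF injP] card_image[OF injN])
  also have "\<dots> = card (?\<rho> ` ?P \<union> ?\<rho> ` ?N) + card (?\<rho> ` ?P \<inter> ?\<rho> ` ?N)"
    using card_Un_Int[OF finite_imageI[OF fP(1)] finite_imageI[OF fP(2)], of ?\<rho> ?\<rho>] .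
  also have "\<dots> \<le> card (RR V F) + (\<Sum>j<d. card F choose j)"
    by (rule add_mono[OF card_mono[OF finRR sub1] bnd2])
  also have "\<dots> \<le> (\<Sum>j\<le>d. card F choose j) + (\<Sum>j<d. card F choose j)"
    using insert.IH[OF insert.prems] by simp
  also have "\<dots> = (\<Sum>j\<le>d. card (insert b F) choose j)" using insert.hyps by (simp add: pascal_sum)
  finally show ?case .
qed

lemma fact_bound: "n \<ge> 5 \<Longrightarrow> (n+1) * 2^(n-1) \<le> (fact n :: nat)"
proof (induction n rule: dec_induct)
  case base
  show ?case by (simp add: fact_numeral)
next
  case (step n)
  have "(Suc n + 1) * 2 ^ (Suc n - 1) = 2 * (n+2) * 2^(n-1)"
    using step.hyps by (cases n) auto
  also have "\<dots> \<le> (n+1) * ((n+1) * 2^(n-1))"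
  proof -
    have "5*(n+1) \<le> (n+1)*(n+1)" using step.hyps by (intro mult_le_mono1) auto
    hence "2 * (n+2) \<le> (n+1)*(n+1)" by (rule order_trans[rotated]) simp
    thus ?thesis by (metis mult.assoc mult_le_mono1)
  qed
  also have "\<dots> \<le> (n+1) * fact n" by (rule mult_le_mono2[OF step.IH])
  also have "\<dots> = fact (Suc n)" by simp
  finally show ?case .
qed

lemma small_cases: "(\<Sum>j\<le>2. (2^2-1::nat) choose j) < 2^(2^2-2+1)"
  "(\<Sum>j\<le>3. (2^3-1::nat) choose j) < 2^(3^2-3+1)"
  "(\<Sum>j\<le>4. (2^4-1::nat) choose j) < 2^(4^2-4+1)"
  by (simp_all add: atMost_nat_numeral binomial_fact' fact_numeral)

lemma num_bound:
  assumes "n \<ge> 2"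
  shows "(\<Sum>j\<le>n. (2^n-1::nat) choose j) < 2^(n^2-n+1)"
proof (cases "n \<le> 4")
  case True
  hence "n = 2 \<or> n = 3 \<or> n = 4" using assms by auto
  thus ?thesis
  proof (elim disjE)
    assume "n = 2" thus ?thesis using small_cases(1) by (simp only:)
  next
    assume "n = 3" thus ?thesis using small_cases(2) by (simp only:)
  next
    assume "n = 4" thus ?thesis using small_cases(3) by (simp only:)
  qed
next
  case False
  let ?M = "2^n - 1 :: nat"
  have n5: "n \<ge> 5" using False by simp
  have "2*k < 2^k" if "k \<ge> 3" for k :: nat using that
  proof (induction k rule: dec_induct)
    case base then show ?case by simp
  next
    case (step k) then show ?case by simp
  qed
  hence "2*n < 2^n" using n5 by simp
  hence "2*n \<le> ?M" by simp
  hence "(\<Sum>j\<le>n. ?M choose j) \<le> (\<Sum>j\<le>n. ?M choose n)"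
    by (intro sum_mono binomial_mono) auto
  hence s1: "(\<Sum>j\<le>n. ?M choose j) \<le> (n+1) * (?M choose n)" by simp
  have "(?M choose n) * fact n \<le> ?M ^ n" by (rule binomial_fact_pow)
  also have "\<dots> < (2^n)^n" using n5 by (intro power_strict_mono) auto
  also have "\<dots> = 2^(n^2-n+1) * 2^(n-1)"
  proof -
    have sq: "n \<le> n*n" by (rule le_square)
    have "n*n - n + 1 + (n - 1) = n*n" using sq n5 by linarith
    hence e: "n^2 - n + 1 + (n - 1) = n*n" by (simp add: power2_eq_square)
    show ?thesis by (simp only: power_mult[symmetric] power_add[symmetric] e)
  qed
  finally have a: "(?M choose n) * fact n < 2^(n^2-n+1) * 2^(n-1)" .
  have "(n+1) * (?M choose n) * 2^(n-1) \<le> (?M choose n) * fact n"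
  proof -
    have "(?M choose n) * ((n+1) * 2^(n-1)) \<le> (?M choose n) * fact n"
      by (rule mult_le_mono2[OF fact_bound[OF n5]])
    thus ?thesis by (simp add: algebra_simps)
  qed
  hence "(n+1) * (?M choose n) * 2^(n-1) < 2^(n^2-n+1) * 2^(n-1)" using a by linarith
  hence "(n+1) * (?M choose n) < 2^(n^2-n+1)" by simp
  thus ?thesis using s1 by linarith
qed

lemma res_hp:
  fixes I :: "'n::finite set"
  shows "res_hyperplane I = hp (\<chi> j. if j \<in> I then 1 else (0::real))"
  unfolding res_hyperplane_def hp_def
proof (rule Collect_cong)
  fix x :: "real^'n"
  have "(\<chi> j. if j \<in> I then 1 else (0::real)) \<bullet> x = (\<Sum>j\<in>UNIV. if j \<in> I then x $ j else 0)"
    unfolding inner_vec_def by (intro sum.cong) auto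
  also have "\<dots> = (\<Sum>j\<in>I. x $ j)" by (simp add: sum.If_cases)
  finally show "((\<Sum>i\<in>I. x $ i) = 0) = ((\<chi> j. if j \<in> I then 1 else 0) \<bullet> x = 0)" by simp
qed

lemma res_facts:
  shows "finite (resonance_arrangement :: (real^'n::finite) set set)"
    and "\<forall>K\<in>(resonance_arrangement :: (real^'n::finite) set set). \<exists>a. K = hp a"
    and "card (resonance_arrangement :: (real^'n::finite) set set) < 2 ^ CARD('n)"
    and "\<Inter>(resonance_arrangement :: (real^'n::finite) set set) \<subseteq> {0}"
proof -
  let ?A = "resonance_arrangement :: (real^'n::finite) set set"
  have A: "?A = res_hyperplane ` {I. I \<noteq> {}}" unfolding resonance_arrangement_def by auto
  show "finite ?A" unfolding A by simp
  show "\<forall>K\<in>?A. \<exists>a. K = hp a" unfolding A using res_hp by blast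
  have "card ?A \<le> card {I::'n set. I \<noteq> {}}" unfolding A by (rule card_image_le) simp
  also have "{I::'n set. I \<noteq> {}} = Pow UNIV - {{}}" by auto
  also have "card (Pow (UNIV::'n set) - {{}}) = 2 ^ CARD('n) - 1"
    by (simp add: card_Pow)
  also have "\<dots> < 2 ^ CARD('n)" by simp
  finally show "card ?A < 2 ^ CARD('n)" .
  show "\<Inter>?A \<subseteq> {0}"
  proof
    fix x assume x: "x \<in> \<Inter>?A"
    have "x $ j = 0" for j
    proof -
      have "res_hyperplane {j} \<in> ?A" unfolding A by auto
      thus ?thesis using x by (auto simp: res_hyperplane_def)
    qed
    thus "x \<in> {0}" by (simp add: vec_eq_iff)
  qed
qed

lemma betti_part:
  assumes "i \<ge> 1"
  shows "real_of_int (betti (resonance_arrangement :: (real^'n::finite) set set) i)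
              < 2 powr (real i * real CARD('n)) / fact i"
proof -
  let ?A = "resonance_arrangement :: (real^'n::finite) set set"
  let ?n = "CARD('n)"
  have pos: "2 powr (real i * real ?n) / fact i > 0" by simp
  show ?thesis
  proof (cases "i \<le> ?n")
    case False
    thus ?thesis using pos by (simp add: betti_def)
  next
    case True
    have dimle: "dim S \<le> ?n" for S :: "(real^'n) set" by (rule dim_subset_UNIV_cart)
    have dU: "dim (UNIV :: (real^'n) set) = ?n" by simp
    have "dim (\<Inter>?A) = 0" using res_facts(4)[where 'n='n] by (simp only: dim_eq_0)
    hence rA: "arr_rank ?A = ?n" unfolding arr_rank_def by (simp only: diff_zero)
    have "coeff (char_poly ?A) (?n - i) = cc UNIV ?A i"
      unfolding char_poly_def coeff_sum coeff_monom cc_def rA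
    proof (intro sum.cong refl)
      fix S assume "S \<in> Pow ?A"
      have "(?n - arr_rank S = ?n - i) = (dim (UNIV::(real^'n) set) - dim (UNIV \<inter> \<Inter>S) = i)"
        using True dimle[of "\<Inter>S"] dU unfolding arr_rank_def Int_UNIV_left by arith
      thus "(if ?n - arr_rank S = ?n - i then (-1) ^ card S else 0) =
        (if dim (UNIV::(real^'n) set) - dim (UNIV \<inter> \<Inter>S) = i then (-1) ^ card S else (0::int))" by simp
    qed
    hence bt: "betti ?A i = \<bar>cc UNIV ?A i\<bar>" using True unfolding betti_def by (simp only: if_True)
    have cb: "0 \<le> (-1)^i * cc UNIV ?A i \<and> (-1)^i * cc UNIV ?A i \<le> int (card ?A choose i)"
      by (rule cc_bound[OF res_facts(1) res_facts(2) subspace_UNIV])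
    have "\<bar>cc UNIV ?A i\<bar> = \<bar>(-1)^i * cc UNIV ?A i\<bar>" by (simp add: abs_mult power_abs)
    also have "\<dots> = (-1)^i * cc UNIV ?A i" using cb by simp
    finally have "betti ?A i \<le> int (card ?A choose i)" using bt cb by simp
    hence "real_of_int (betti ?A i) \<le> real_of_int (int (card ?A choose i))" by (simp only: of_int_le_iff)
    hence b1: "real_of_int (betti ?A i) \<le> real (card ?A choose i)" by simp
    have "(card ?A choose i) * fact i \<le> card ?A ^ i" by (rule binomial_fact_pow)
    also have "\<dots> < (2 ^ ?n) ^ i" using res_facts(3)[where 'n='n] assms
      by (intro power_strict_mono) auto
    also have "\<dots> = 2 ^ (i * ?n)" by (simp add: power_mult[symmetric] mult.commute)
    finally have "real ((card ?A choose i) * fact i) < real (2 ^ (i * ?n))" by (simp only: of_nat_less_iff)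
    hence "real (card ?A choose i) * fact i < 2 ^ (i * ?n)" by simp
    hence "real (card ?A choose i) < 2 ^ (i * ?n) / fact i" by (simp add: field_simps)
    moreover have "2 powr (real i * real ?n) = 2 ^ (i * ?n)"
      by (simp add: powr_realpow[symmetric])
    ultimately show ?thesis using b1 by simp
  qed
qed

lemma chamber_part:
  assumes n1: "CARD('n::finite) > 1"
  shows "log 2 (real (num_chambers (resonance_arrangement :: (real^'n) set set)))
              < real CARD('n) ^ 2 - real CARD('n) + 1"
proof -
  let ?A = "resonance_arrangement :: (real^'n) set set"
  let ?n = "CARD('n)"
  let ?S = "UNIV - \<Union>?A"
  define g where "g K = (SOME a. K = hp a)" for K :: "(real^'n) set"
  have g: "K = hp (g K)" if "K \<in> ?A" for K
    unfolding g_def using res_facts(2)[where 'n='n] that by (metis (mono_tags, lifting) someI_ex)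
  define F where "F = g ` ?A"
  have finF: "finite F" unfolding F_def using res_facts(1)[where 'n='n] by simp
  have cF: "card F < 2 ^ ?n" unfolding F_def using res_facts(3)[where 'n='n] card_image_le[OF res_facts(1)[where 'n='n], of g]
    by linarith
  have inS: "x \<in> ?S \<longleftrightarrow> (\<forall>b\<in>F. b \<bullet> x \<noteq> 0)" for x
  proof -
    have "x \<in> ?S \<longleftrightarrow> (\<forall>K\<in>?A. x \<notin> K)" by blast
    also have "\<dots> \<longleftrightarrow> (\<forall>K\<in>?A. g K \<bullet> x \<noteq> 0)"
    proof (intro ball_cong refl)
      fix K assume "K \<in> ?A"
      hence "x \<in> K \<longleftrightarrow> x \<in> hp (g K)" using g by simp
      thus "(x \<notin> K) = (g K \<bullet> x \<noteq> 0)" by (simp add: hp_def)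
    qed
    also have "\<dots> \<longleftrightarrow> (\<forall>b\<in>F. b \<bullet> x \<noteq> 0)" unfolding F_def by blast
    finally show ?thesis .
  qed
  define \<phi> where "\<phi> C = sv F (SOME x. x \<in> C)" for C :: "(real^'n) set"
  have comp_pt: "(SOME x. x \<in> C) \<in> C" if "C \<in> components ?S" for C
    using in_components_nonempty[OF that] by (simp add: some_in_eq)
  have seg: "closed_segment x y \<subseteq> ?S" if "x \<in> ?S" "y \<in> ?S" "sv F x = sv F y" for x y
  proof
    fix z assume "z \<in> closed_segment x y"
    then obtain u where u: "0 \<le> u" "u \<le> 1" "z = (1 - u) *\<^sub>R x + u *\<^sub>R y" by (auto simp: in_segment)
    have "b \<bullet> z \<noteq> 0" if b: "b \<in> F" for b
    proof -
      have "b \<bullet> x \<noteq> 0" "b \<bullet> y \<noteq> 0" using inS \<open>x \<in> ?S\<close> \<open>y \<in> ?S\<close> b by auto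
      moreover have "b \<bullet> x > 0 \<longleftrightarrow> b \<bullet> y > 0" using \<open>sv F x = sv F y\<close> b by (auto simp: sv_def set_eq_iff)
      moreover have "b \<bullet> z = (1-u) * (b \<bullet> x) + u * (b \<bullet> y)"
        using u(3) by (simp add: inner_add_right inner_scaleR_right)
      ultimately show ?thesis using mix_sign[OF u(1,2)] by simp
    qed
    thus "z \<in> ?S" using inS by blast
  qed
  have inj: "inj_on \<phi> (components ?S)"
  proof (rule inj_onI)
    fix C D assume C: "C \<in> components ?S" and D: "D \<in> components ?S" and e: "\<phi> C = \<phi> D"
    let ?x = "SOME x. x \<in> C" and ?y = "SOME x. x \<in> D"
    have x: "?x \<in> C" and y: "?y \<in> D" using comp_pt C D by auto
    have xS: "?x \<in> ?S" and yS: "?y \<in> ?S" using x y in_components_subset[OF C] in_components_subset[OF D] by auto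
    have Cx: "C = connected_component_set ?S ?x"
      using C x by (metis components_iff connected_component_eq)
    have Dy: "D = connected_component_set ?S ?y"
      using D y by (metis components_iff connected_component_eq)
    have "closed_segment ?x ?y \<subseteq> connected_component_set ?S ?x"
      using seg[OF xS yS] e unfolding \<phi>_def
      by (intro connected_component_maximal) auto
    hence "?y \<in> C" using Cx by auto
    thus "C = D" using Cx Dy by (metis connected_component_eq)
  qed
  have img: "\<phi> ` components ?S \<subseteq> RR UNIV F"
  proof
    fix s assume "s \<in> \<phi> ` components ?S"
    then obtain C where C: "C \<in> components ?S" and s: "s = \<phi> C" by auto
    have "(SOME x. x \<in> C) \<in> ?S" using comp_pt[OF C] in_components_subset[OF C] by auto
    thus "s \<in> RR UNIV F" unfolding s \<phi>_def RR_def using inS by blast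
  qed
  have finRR: "finite (RR UNIV F)" using RR_sub[of UNIV F] finF by (auto intro: finite_subset)
  have "num_chambers ?A = card (components ?S)" by (simp add: num_chambers_def)
  also have "\<dots> \<le> card (RR UNIV F)" using card_inj_on_le[OF inj img finRR] .
  also have "\<dots> \<le> (\<Sum>j\<le>?n. card F choose j)"
    by (rule RR_bound[OF finF subspace_UNIV]) (simp add: dim_subset_UNIV_cart)
  also have "\<dots> \<le> (\<Sum>j\<le>?n. (2^?n - 1) choose j)"
    using cF by (intro sum_mono binomial_right_mono) simp
  also have "\<dots> < 2^(?n^2 - ?n + 1)" using n1 by (intro num_bound) simp
  finally have lt: "num_chambers ?A < 2^(?n^2 - ?n + 1)" .
  have rexp: "real (?n^2 - ?n + 1) = real ?n ^ 2 - real ?n + 1"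
  proof -
    have "?n \<le> ?n^2" by (simp add: power2_eq_square)
    thus ?thesis by (simp add: of_nat_diff)
  qed
  show ?thesis
  proof (cases "num_chambers ?A = 0")
    case True
    have "0 < real ?n ^ 2 - real ?n + 1" unfolding rexp[symmetric] by simp
    thus ?thesis using True by (simp add: log_def)
  next
    case False
    have "real (num_chambers ?A) < real ((2::nat)^(?n^2 - ?n + 1))" using lt by (simp only: of_nat_less_iff)
    also have "\<dots> = 2 powr (real ?n ^ 2 - real ?n + 1)"
    proof -
      have "(2::real) powr real (?n^2-?n+1) = 2^(?n^2-?n+1)" by (rule powr_realpow) simp
      thus ?thesis unfolding rexp[symmetric] by simp
    qed
    finally show ?thesis using False by (subst log_less_iff) auto
  qed
qed


theorem mainTheorem3:
  shows "(\<forall>i::nat. i \<ge> 1 \<longrightarrow>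
            real_of_int (betti (resonance_arrangement :: (real^'n::finite) set set) i)
              < 2 powr (real i * real CARD('n)) / fact i)
       \<and> (CARD('n) > 1 \<longrightarrow>
            log 2 (real (num_chambers (resonance_arrangement :: (real^'n::finite) set set)))
              < real CARD('n) ^ 2 - real CARD('n) + 1)"
  using betti_part[where 'n='n] chamber_part[where 'n='n] by blast

end
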